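(* With $\bar X$, $\bar s$, $\bar G$, $\bar C$ as below, let $\varphi:\bar X\to\mathbb{R}$ be continuous, let $\bar\varphi$ be the filtering function on $\bar C$ induced by $\varphi$, and let $\varphi':S^2\to\mathbb{R}$, $\varphi'(x_1,x_2,x_3)=\max\{\varphi(x_1,x_2,x_3,1),\varphi(x_1,x_2,x_3,-1)\}$. Then for every $n$ the persistent Betti number function $\rho^{\bar\varphi}_n$ of the $\bar G$-chain complex $\bar C$ equals the classical persistent Betti number function $\rho^{\varphi'}_n$ of $\varphi'$ on $S^2$ (singular homology of sublevel sets over $\mathbb{K}$).
   Context: $\bar X=X_+\cup X_-\subset\mathbb{R}^4$ with $X_\pm=\{(x_1,x_2,x_3,x_4):x_1^2+x_2^2+x_3^2=1,\ x_4=\pm1\}$; $\bar s(x_1,x_2,x_3,x_4)=(x_1,x_2,x_3,-x_4)$; $\bar G$ is the group of maps $(x_1,x_2,x_3,x_4)\mapsto(\tilde g(x_1,x_2,x_3),x_4)$ with $\tilde g$ an isometry of $S^2$; $\bar C\subseteq S(\bar X)$ is the subcomplex of chains of the form $\sum_r a^r(\sigma_{j_r}+\bar s\circ\sigma_{j_r})$. Induced filtering function: $\bar\varphi(0)=-\infty$; for a non-null chain in reduced form $\sum_r a^r\sigma_{j_r}$ (distinct simplices, nonzero coefficients), $\bar\varphi$ is the maximum of $\varphi$ on $\bigcup_r\sigma_{j_r}(\Delta_n)$. PBNF of $\bar C$: for $u<v$, $\rho^{\bar\varphi}_n(u,v)$ is the rank of the image of $H_n(\bar C^{\bar\varphi\le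 u})\to H_n(\bar C^{\bar\varphi\le v})$, with $\bar C^{\bar\varphi\le u}_n=\{c\in\bar C_n:\bar\varphi(c)\le u\}$. Classical PBNF: $\rho^{\varphi'}_n(u,v)$ is the rank of the image of $H_n(\{\varphi'\le u\})\to H_n(\{\varphi'\le v\})$. *)

theory Defs
  imports "HOL-Analysis.Analysis"
begin

definition S2 :: "(real \<times> real \<times> real) set" where
  "S2 = {(x1, x2, x3). x1^2 + x2^2 + x3^2 = 1}"

definition Xplus :: "(real \<times> real \<times> real \<times> real) set" where
  "Xplus = {(x1, x2, x3, x4). x1^2 + x2^2 + x3^2 = 1 \<and> x4 = 1}"

definition Xminus :: "(real \<times> real \<times> real \<times> real) set" where
  "Xminus = {(x1, x2, x3, x4). x1^2 + x2^2 + x3^2 = 1 \<and> x4 = -1}"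

definition Xbar :: "(real \<times> real \<times> real \<times> real) set" where
  "Xbar = Xplus \<union> Xminus"

definition sbar :: "real \<times> real \<times> real \<times> real \<Rightarrow> real \<times> real \<times> real \<times> real" where
  "sbar = (\<lambda>(x1, x2, x3, x4). (x1, x2, x3, - x4))"

definition phi_prime :: "(real \<times> real \<times> real \<times> real \<Rightarrow> real) \<Rightarrow> real \<times> real \<times> real \<Rightarrow> real" where
  "phi_prime \<phi> = (\<lambda>(x1, x2, x3). max (\<phi> (x1, x2, x3, 1)) (\<phi> (x1, x2, x3, -1)))"

definition std_simplex :: "nat \<Rightarrow> (nat \<Rightarrow> real) set" where
  "std_simplex n = {t. (\<forall>i. 0 \<le> t i) \<and> (\<forall>i>n. t i = 0) \<and> (\<Sum>i\<le>n. t i) = 1}"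

definition sing_simplex :: "nat \<Rightarrow> 'p::topological_space set \<Rightarrow> ((nat \<Rightarrow> real) \<Rightarrow> 'p) \<Rightarrow> bool" where
  "sing_simplex n Y \<sigma> \<longleftrightarrow> continuous_on (std_simplex n) \<sigma> \<and> \<sigma> ` std_simplex n \<subseteq> Y
      \<and> \<sigma> \<in> extensional (std_simplex n)"

definition face_map :: "nat \<Rightarrow> (nat \<Rightarrow> real) \<Rightarrow> (nat \<Rightarrow> real)" where
  "face_map k t = (\<lambda>i. if i < k then t i else if i = k then 0 else t (i - 1))"

definition sing_face :: "nat \<Rightarrow> nat \<Rightarrow> ((nat \<Rightarrow> real) \<Rightarrow> 'p) \<Rightarrow> ((nat \<Rightarrow> real) \<Rightarrow> 'p)" where
  "sing_face n k \<sigma> = restrict (\<sigma> \<circ> face_map k) (std_simplex (n - 1))"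

type_synonym ('p, 'k) chain = "((nat \<Rightarrow> real) \<Rightarrow> 'p) \<Rightarrow> 'k"

definition chains :: "'k itself \<Rightarrow> nat \<Rightarrow> 'p::topological_space set \<Rightarrow> ('p, 'k::field) chain set" where
  "chains _ n Y = {c. finite {\<sigma>. c \<sigma> \<noteq> 0} \<and> (\<forall>\<sigma>. c \<sigma> \<noteq> 0 \<longrightarrow> sing_simplex n Y \<sigma>)}"

definition chain_bd :: "nat \<Rightarrow> ('p, 'k::field) chain \<Rightarrow> ('p, 'k) chain" where
  "chain_bd n c = (if n = 0 then (\<lambda>\<tau>. 0) else
     (\<lambda>\<tau>. \<Sum>\<sigma>\<in>{\<sigma>. c \<sigma> \<noteq> 0}. \<Sum>k\<le>n. if sing_face n k \<sigma> = \<tau> then (-1)^k * c \<sigma> else 0))"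

definition lincomb :: "(('p, 'k::field) chain \<Rightarrow> 'k) \<Rightarrow> ('p, 'k) chain set \<Rightarrow> ('p, 'k) chain" where
  "lincomb a S = (\<lambda>\<tau>. \<Sum>s\<in>S. a s * s \<tau>)"

definition indep_mod :: "('p, 'k::field) chain set \<Rightarrow> ('p, 'k) chain set \<Rightarrow> bool" where
  "indep_mod W S \<longleftrightarrow> (\<forall>a. lincomb a S \<in> W \<longrightarrow> (\<forall>s\<in>S. a s = 0))"

(* For chain subcomplexes A m \<subseteq> A' m (degreewise), the rank of the image of
   H_n(A) \<rightarrow> H_n(A') induced by inclusion, i.e. dim (Z_n(A) + B_n(A')) / B_n(A'),
   as an extended natural (\<infinity> if infinite-dimensional). *)
definition pers_rank :: "(nat \<Rightarrow> ('p, 'k::field) chain set) \<Rightarrow> (nat \<Rightarrow> ('p, 'k) chain set) \<Rightarrow> nat \<Rightarrow> enat" where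
  "pers_rank A A' n = Sup {enat (card S) | S. finite S \<and> S \<subseteq> {c \<in> A n. chain_bd n c = (\<lambda>_. 0)}
       \<and> indep_mod (chain_bd (Suc n) ` A' (Suc n)) S}"

definition pbn_classical :: "'k::field itself \<Rightarrow> 'p::topological_space set \<Rightarrow> ('p \<Rightarrow> real)
      \<Rightarrow> nat \<Rightarrow> real \<Rightarrow> real \<Rightarrow> enat" where
  "pbn_classical K Y f n u v =
     pers_rank (\<lambda>m. chains K m {y \<in> Y. f y \<le> u}) (\<lambda>m. chains K m {y \<in> Y. f y \<le> v}) n"

definition delta :: "((nat \<Rightarrow> real) \<Rightarrow> 'p) \<Rightarrow> ('p, 'k::field) chain" where
  "delta \<sigma> = (\<lambda>\<tau>. if \<tau> = \<sigma> then 1 else 0)"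

definition Cbar :: "'k::field itself \<Rightarrow> nat \<Rightarrow> (real \<times> real \<times> real \<times> real, 'k) chain set" where
  "Cbar K n = {c. \<exists>S a. finite S \<and> (\<forall>\<sigma>\<in>S. sing_simplex n Xbar \<sigma>) \<and>
      c = (\<lambda>\<tau>. \<Sum>\<sigma>\<in>S. a \<sigma> * (delta \<sigma> \<tau> + delta (restrict (sbar \<circ> \<sigma>) (std_simplex n)) \<tau>))}"

definition phibar :: "(real \<times> real \<times> real \<times> real \<Rightarrow> real) \<Rightarrow> nat
      \<Rightarrow> (real \<times> real \<times> real \<times> real, 'k::field) chain \<Rightarrow> ereal" where
  "phibar \<phi> n c = (if c = (\<lambda>_. 0) then -\<infinity> else
      Sup ((\<lambda>x. ereal (\<phi> x)) ` (\<Union>{\<sigma> ` std_simplex n | \<sigma>. c \<sigma> \<noteq> 0})))"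

definition Cbar_sub :: "'k::field itself \<Rightarrow> (real \<times> real \<times> real \<times> real \<Rightarrow> real) \<Rightarrow> nat \<Rightarrow> real
      \<Rightarrow> (real \<times> real \<times> real \<times> real, 'k) chain set" where
  "Cbar_sub K \<phi> n u = {c \<in> Cbar K n. phibar \<phi> n c \<le> ereal u}"

definition pbn_bar :: "'k::field itself \<Rightarrow> (real \<times> real \<times> real \<times> real \<Rightarrow> real)
      \<Rightarrow> nat \<Rightarrow> real \<Rightarrow> real \<Rightarrow> enat" where
  "pbn_bar K \<phi> n u v = pers_rank (\<lambda>m. Cbar_sub K \<phi> m u) (\<lambda>m. Cbar_sub K \<phi> m v) n"

end

theory Submission imports Defs begin

definition lft :: "real \<Rightarrow> nat \<Rightarrow> ((nat \<Rightarrow> real) \<Rightarrow> real \<times> real \<times> real) \<Rightarrow> ((nat \<Rightarrow> real) \<Rightarrow> real \<times> real \<times> real \<times> real)" where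
  "lft e m \<rho> = restrict (\<lambda>t. (fst (\<rho> t), fst (snd (\<rho> t)), snd (snd (\<rho> t)), e)) (std_simplex m)"

definition prj :: "nat \<Rightarrow> ((nat \<Rightarrow> real) \<Rightarrow> real \<times> real \<times> real \<times> real) \<Rightarrow> ((nat \<Rightarrow> real) \<Rightarrow> real \<times> real \<times> real)" where
  "prj m \<sigma> = restrict (\<lambda>t. (fst (\<sigma> t), fst (snd (\<sigma> t)), fst (snd (snd (\<sigma> t))))) (std_simplex m)"

definition isl :: "nat \<Rightarrow> ((nat \<Rightarrow> real) \<Rightarrow> real \<times> real \<times> real \<times> real) \<Rightarrow> bool" where
  "isl m \<sigma> \<longleftrightarrow> \<sigma> = lft 1 m (prj m \<sigma>) \<or> \<sigma> = lft (-1) m (prj m \<sigma>)"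

definition Phi :: "nat \<Rightarrow> (real \<times> real \<times> real, 'k::field) chain \<Rightarrow> (real \<times> real \<times> real \<times> real, 'k) chain" where
  "Phi m d = (\<lambda>\<sigma>. if isl m \<sigma> then d (prj m \<sigma>) else 0)"

lemma std_ne: "(\<lambda>i. if i = 0 then 1 else 0) \<in> std_simplex m"
  unfolding std_simplex_def by auto

lemma split_sum: "k \<le> Suc m \<Longrightarrow> (\<Sum>i\<le>m. (f::nat\<Rightarrow>real) i) = (\<Sum>i<k. f i) + (\<Sum>i=k..m. f i)"
proof -
  assume "k \<le> Suc m"
  hence "{..m} = {..<k} \<union> {k..m}" by auto
  thus ?thesis by (simp add: sum.union_disjoint ivl_disj_int)
qed

lemma face_map_std:
  assumes "k \<le> Suc n" "t \<in> std_simplex n"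
  shows "face_map k t \<in> std_simplex (Suc n)"
proof -
  have t0: "\<forall>i. 0 \<le> t i" and t1: "\<forall>i>n. t i = 0" and t2: "(\<Sum>i\<le>n. t i) = 1"
    using assms(2) unfolding std_simplex_def by auto
  let ?f = "face_map k t"
  have "(\<Sum>i\<le>Suc n. ?f i) = (\<Sum>i<k. ?f i) + (\<Sum>i=k..Suc n. ?f i)"
    using assms(1) by (intro split_sum) simp
  also have "(\<Sum>i=k..Suc n. ?f i) = ?f k + (\<Sum>i=Suc k..Suc n. ?f i)"
    using assms(1) by (rule sum.atLeast_Suc_atMost)
  also have "(\<Sum>i=Suc k..Suc n. ?f i) = (\<Sum>i=k..n. t i)"
    by (subst sum.shift_bounds_cl_Suc_ivl) (simp add: face_map_def)
  also have "(\<Sum>i<k. ?f i) = (\<Sum>i<k. t i)" by (simp add: face_map_def)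
  finally have "(\<Sum>i\<le>Suc n. ?f i) = (\<Sum>i<k. t i) + (\<Sum>i=k..n. t i)" by (simp add: face_map_def)
  also have "\<dots> = (\<Sum>i\<le>n. t i)"
    using assms(1) by (rule split_sum[symmetric])
  finally show ?thesis using t0 t1 t2 assms(1) unfolding std_simplex_def face_map_def by auto
qed


lemma lft_ext: "lft e m \<rho> \<in> extensional (std_simplex m)"
  unfolding lft_def by simp

lemma prj_ext: "prj m \<sigma> \<in> extensional (std_simplex m)"
  unfolding prj_def by simp

lemma prj_lft: "\<rho> \<in> extensional (std_simplex m) \<Longrightarrow> prj m (lft e m \<rho>) = \<rho>"
  unfolding prj_def lft_def by (rule ext) (auto simp: extensional_def)

lemma lft_inj: "\<rho> \<in> extensional (std_simplex m) \<Longrightarrow> \<rho>' \<in> extensional (std_simplex m) \<Longrightarrow>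
   lft e m \<rho> = lft e' m \<rho>' \<Longrightarrow> \<rho> = \<rho>'"
  by (metis prj_lft)

lemma lft_eq_iff: "\<rho> \<in> extensional (std_simplex m) \<Longrightarrow> \<rho>' \<in> extensional (std_simplex m) \<Longrightarrow>
   lft e m \<rho> = lft e' m \<rho>' \<longleftrightarrow> e = e' \<and> \<rho> = \<rho>'"
proof
  assume a: "\<rho> \<in> extensional (std_simplex m)" "\<rho>' \<in> extensional (std_simplex m)" "lft e m \<rho> = lft e' m \<rho>'"
  have "lft e m \<rho> (\<lambda>i. if i = 0 then 1 else 0) = lft e' m \<rho>' (\<lambda>i. if i = 0 then 1 else 0)"
    using a(3) by simp
  hence "e = e'" using std_ne[of m] unfolding lft_def by simp
  thus "e = e' \<and> \<rho> = \<rho>'" using lft_inj[OF a] by simp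
qed simp

lemma isl_lft: "e = 1 \<or> e = -1 \<Longrightarrow> \<rho> \<in> extensional (std_simplex m) \<Longrightarrow> isl m (lft e m \<rho>)"
  unfolding isl_def using prj_lft by auto

lemma Phi_lft: "e = 1 \<or> e = -1 \<Longrightarrow> \<rho> \<in> extensional (std_simplex m) \<Longrightarrow> Phi m d (lft e m \<rho>) = d \<rho>"
  unfolding Phi_def using isl_lft prj_lft by auto

lemma key:
  assumes "\<rho> \<in> extensional (std_simplex n)"
  shows "(if lft 1 n \<rho> = \<sigma> then x else 0) + (if lft (-1) n \<rho> = \<sigma> then x else 0)
     = (if isl n \<sigma> then (if \<rho> = prj n \<sigma> then x else (0::'a::comm_monoid_add)) else 0)"
proof (cases "lft 1 n \<rho> = \<sigma>")
  case True
  hence "lft (-1) n \<rho> \<noteq> \<sigma>" using lft_eq_iff[OF assms assms, of "-1" 1] by auto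
  moreover have "isl n \<sigma>" "prj n \<sigma> = \<rho>" using True isl_lft[OF _ assms] prj_lft[OF assms] by auto
  ultimately show ?thesis using True by auto
next
  case False
  show ?thesis
  proof (cases "lft (-1) n \<rho> = \<sigma>")
    case True
    moreover have "isl n \<sigma>" "prj n \<sigma> = \<rho>" using True isl_lft[OF _ assms] prj_lft[OF assms] by auto
    ultimately show ?thesis using False by auto
  next
    case F2: False
    have "\<not> (isl n \<sigma> \<and> \<rho> = prj n \<sigma>)" using False F2 unfolding isl_def by auto
    thus ?thesis using False F2 by auto
  qed
qed

lemma Phi_inj:
  assumes "\<forall>\<tau>. d \<tau> \<noteq> 0 \<longrightarrow> \<tau> \<in> extensional (std_simplex m)"
    and "\<forall>\<tau>. d' \<tau> \<noteq> 0 \<longrightarrow> \<tau> \<in> extensional (std_simplex m)"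
    and "Phi m d = Phi m d'"
  shows "d = d'"
proof
  fix \<tau>
  show "d \<tau> = d' \<tau>"
  proof (cases "\<tau> \<in> extensional (std_simplex m)")
    case True
    thus ?thesis using Phi_lft[of 1 \<tau> m d] Phi_lft[of 1 \<tau> m d'] assms(3) by simp
  next
    case False thus ?thesis using assms(1,2) by metis
  qed
qed

lemma Phi_zero: "Phi m (\<lambda>_. 0) = (\<lambda>_. 0)"
  unfolding Phi_def by auto

lemma face_lft:
  assumes "k \<le> Suc n"
  shows "sing_face (Suc n) k (lft e (Suc n) \<rho>) = lft e n (sing_face (Suc n) k \<rho>)"
  unfolding sing_face_def lft_def using face_map_std[OF assms] by (auto intro!: ext)

lemma face_ext: "sing_face n k \<sigma> \<in> extensional (std_simplex (n - 1))"
  unfolding sing_face_def by simp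

lemma face_ext_Suc: "sing_face (Suc n) k \<sigma> \<in> extensional (std_simplex n)"
  unfolding sing_face_def by simp

lemma bd_ext: "chain_bd (Suc n) c \<tau> \<noteq> 0 \<Longrightarrow> \<tau> \<in> extensional (std_simplex n)"
proof (rule ccontr)
  assume a: "chain_bd (Suc n) c \<tau> \<noteq> 0" "\<tau> \<notin> extensional (std_simplex n)"
  hence "\<And>\<sigma> k. sing_face (Suc n) k \<sigma> \<noteq> \<tau>" using face_ext[of "Suc n"] by force
  hence "chain_bd (Suc n) c \<tau> = 0" unfolding chain_bd_def by simp
  thus False using a by simp
qed


lemma bd_Phi:
  fixes d :: "(real \<times> real \<times> real, 'k::field) chain"
  assumes fin: "finite {\<tau>. d \<tau> \<noteq> 0}"
    and ext: "\<forall>\<tau>. d \<tau> \<noteq> 0 \<longrightarrow> \<tau> \<in> extensional (std_simplex (Suc n))"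
  shows "chain_bd (Suc n) (Phi (Suc n) d) = Phi n (chain_bd (Suc n) d)"
proof
  fix \<sigma>'
  define D where "D = {\<tau>. d \<tau> \<noteq> 0}"
  define L1 where "L1 = lft 1 (Suc n) ` D"
  define L2 where "L2 = lft (-1) (Suc n) ` D"
  define F where "F = (\<lambda>\<sigma>. \<Sum>k\<le>Suc n. if sing_face (Suc n) k \<sigma> = \<sigma>' then (-1)^k * Phi (Suc n) d \<sigma> else (0::'k))"
  have extD: "\<And>\<tau>. \<tau> \<in> D \<Longrightarrow> \<tau> \<in> extensional (std_simplex (Suc n))" using ext D_def by auto
  have supp: "{\<sigma>. Phi (Suc n) d \<sigma> \<noteq> 0} \<subseteq> L1 \<union> L2"
  proof
    fix \<sigma> assume "\<sigma> \<in> {\<sigma>. Phi (Suc n) d \<sigma> \<noteq> 0}"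
    hence "isl (Suc n) \<sigma>" "prj (Suc n) \<sigma> \<in> D" unfolding Phi_def D_def by (auto split: if_splits)
    thus "\<sigma> \<in> L1 \<union> L2" unfolding isl_def L1_def L2_def by blast
  qed
  have finL: "finite (L1 \<union> L2)" using fin unfolding L1_def L2_def D_def by simp
  have "chain_bd (Suc n) (Phi (Suc n) d) \<sigma>' = (\<Sum>\<sigma>\<in>{\<sigma>. Phi (Suc n) d \<sigma> \<noteq> 0}. F \<sigma>)"
    unfolding chain_bd_def F_def by simp
  also have "\<dots> = (\<Sum>\<sigma>\<in>L1 \<union> L2. F \<sigma>)"
  proof (rule sum.mono_neutral_left[OF finL supp], rule ballI)
    fix i assume "i \<in> L1 \<union> L2 - {\<sigma>. Phi (Suc n) d \<sigma> \<noteq> 0}"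
    hence "Phi (Suc n) d i = 0" by simp
    thus "F i = 0" unfolding F_def by (intro sum.neutral) (simp add: \<open>Phi (Suc n) d i = 0\<close>)
  qed
  also have "\<dots> = (\<Sum>\<sigma>\<in>L1. F \<sigma>) + (\<Sum>\<sigma>\<in>L2. F \<sigma>)"
  proof (rule sum.union_disjoint)
    show "finite L1" "finite L2" using finL by auto
    show "L1 \<inter> L2 = {}" unfolding L1_def L2_def using lft_eq_iff extD by fastforce
  qed
  also have "(\<Sum>\<sigma>\<in>L1. F \<sigma>) = (\<Sum>\<tau>\<in>D. F (lft 1 (Suc n) \<tau>))"
    unfolding L1_def by (subst sum.reindex) (auto intro!: inj_onI dest: lft_inj[OF extD extD])
  also have "(\<Sum>\<sigma>\<in>L2. F \<sigma>) = (\<Sum>\<tau>\<in>D. F (lft (-1) (Suc n) \<tau>))"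
    unfolding L2_def by (subst sum.reindex) (auto intro!: inj_onI dest: lft_inj[OF extD extD])
  also have "(\<Sum>\<tau>\<in>D. F (lft 1 (Suc n) \<tau>)) + (\<Sum>\<tau>\<in>D. F (lft (-1) (Suc n) \<tau>))
     = (\<Sum>\<tau>\<in>D. \<Sum>k\<le>Suc n. (if lft 1 n (sing_face (Suc n) k \<tau>) = \<sigma>' then (-1)^k * d \<tau> else 0)
          + (if lft (-1) n (sing_face (Suc n) k \<tau>) = \<sigma>' then (-1)^k * d \<tau> else 0))"
    unfolding sum.distrib[symmetric] F_def
    by (intro sum.cong refl) (simp add: Phi_lft extD face_lft)
  also have "\<dots> = (\<Sum>\<tau>\<in>D. \<Sum>k\<le>Suc n. (if isl n \<sigma>' then (if sing_face (Suc n) k \<tau> = prj n \<sigma>' then (-1)^k * d \<tau> else 0) else 0))"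
    by (intro sum.cong refl) (rule key[OF face_ext_Suc])
  also have "\<dots> = Phi n (chain_bd (Suc n) d) \<sigma>'"
    unfolding Phi_def chain_bd_def D_def by simp
  finally show "chain_bd (Suc n) (Phi (Suc n) d) \<sigma>' = Phi n (chain_bd (Suc n) d) \<sigma>'" .
qed


lemma std_const:
  fixes h :: "(nat \<Rightarrow> real) \<Rightarrow> real"
  assumes cont: "continuous_on (std_simplex m) h"
    and vals: "\<forall>t\<in>std_simplex m. h t = 1 \<or> h t = -1"
    and t: "t \<in> std_simplex m" and t': "t' \<in> std_simplex m"
  shows "h t = h t'"
proof (rule ccontr)
  assume ne: "h t \<noteq> h t'"
  define \<gamma> where "\<gamma> = (\<lambda>s::real. \<lambda>i. (1 - s) * t i + s * t' i)"
  have sub: "\<gamma> ` {0..1} \<subseteq> std_simplex m"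
  proof
    fix x assume "x \<in> \<gamma> ` {0..1}"
    then obtain s where s: "0 \<le> s" "s \<le> 1" "x = \<gamma> s" by auto
    have "(\<Sum>i\<le>m. x i) = (1 - s) * (\<Sum>i\<le>m. t i) + s * (\<Sum>i\<le>m. t' i)"
      unfolding s(3) \<gamma>_def by (simp add: sum.distrib sum_distrib_left)
    also have "\<dots> = 1" using t t' unfolding std_simplex_def by simp
    finally show "x \<in> std_simplex m" using t t' s unfolding std_simplex_def \<gamma>_def by auto
  qed
  have cg: "continuous_on {0..1} \<gamma>" unfolding \<gamma>_def by (intro continuous_intros)
  have "continuous_on {0..1} (h \<circ> \<gamma>)"
    by (rule continuous_on_compose[OF cg]) (rule continuous_on_subset[OF cont sub])
  hence conn: "connected ((h \<circ> \<gamma>) ` {0..1})" by (rule connected_continuous_image) simp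
  have g0: "\<gamma> 0 = t" and g1: "\<gamma> 1 = t'" unfolding \<gamma>_def by auto
  have a: "h t \<in> (h \<circ> \<gamma>) ` {0..1}" using g0 by force
  have b: "h t' \<in> (h \<circ> \<gamma>) ` {0..1}" using g1 by force
  have v1: "h t = 1 \<or> h t = -1" and v2: "h t' = 1 \<or> h t' = -1" using vals t t' by auto
  have "h t = 1 \<and> h t' = -1 \<or> h t = -1 \<and> h t' = 1" using v1 v2 ne by auto
  hence "(0::real) \<in> (h \<circ> \<gamma>) ` {0..1}"
    using connectedD_interval[OF conn a b] connectedD_interval[OF conn b a] by force
  then obtain s where "s \<in> {0..1}" "h (\<gamma> s) = 0" by auto
  thus False using vals sub by force
qed

lemma lft_sing:
  assumes "sing_simplex m S2 \<rho>" "e = 1 \<or> e = -1"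
  shows "sing_simplex m Xbar (lft e m \<rho>)"
proof -
  have c: "continuous_on (std_simplex m) \<rho>" and im: "\<rho> ` std_simplex m \<subseteq> S2"
    using assms(1) unfolding sing_simplex_def by auto
  have "continuous_on (std_simplex m) (\<lambda>t. (fst (\<rho> t), fst (snd (\<rho> t)), snd (snd (\<rho> t)), e))"
    by (intro continuous_intros c)
  moreover have "continuous_on (std_simplex m) (lft e m \<rho>) = continuous_on (std_simplex m) (\<lambda>t. (fst (\<rho> t), fst (snd (\<rho> t)), snd (snd (\<rho> t)), e))"
    by (rule continuous_on_cong) (auto simp: lft_def)
  ultimately have "continuous_on (std_simplex m) (lft e m \<rho>)" by simp
  moreover have "lft e m \<rho> ` std_simplex m \<subseteq> Xbar"
  proof
    fix x assume "x \<in> lft e m \<rho> ` std_simplex m"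
    then obtain t where t: "t \<in> std_simplex m" "x = lft e m \<rho> t" by auto
    obtain a b c where abc: "\<rho> t = (a, b, c)" by (cases "\<rho> t") auto
    have "a^2 + b^2 + c^2 = 1" using im t abc unfolding S2_def by force
    thus "x \<in> Xbar" using t abc assms(2) unfolding lft_def Xbar_def Xplus_def Xminus_def by auto
  qed
  ultimately show ?thesis unfolding sing_simplex_def using lft_ext by blast
qed

lemma sing_Xbar:
  assumes "sing_simplex m Xbar \<sigma>"
  shows "\<exists>e. (e = 1 \<or> e = -1) \<and> \<sigma> = lft e m (prj m \<sigma>)" "sing_simplex m S2 (prj m \<sigma>)"
proof -
  have c: "continuous_on (std_simplex m) \<sigma>" and im: "\<sigma> ` std_simplex m \<subseteq> Xbar"
    and ex: "\<sigma> \<in> extensional (std_simplex m)"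
    using assms unfolding sing_simplex_def by auto
  define h where "h = (\<lambda>t. snd (snd (snd (\<sigma> t))))"
  have hc: "continuous_on (std_simplex m) h" unfolding h_def by (intro continuous_intros c)
  have pt: "\<And>t. t \<in> std_simplex m \<Longrightarrow> fst (\<sigma> t)^2 + fst (snd (\<sigma> t))^2 + fst (snd (snd (\<sigma> t)))^2 = 1 \<and> (h t = 1 \<or> h t = -1)"
  proof -
    fix t assume "t \<in> std_simplex m"
    hence "\<sigma> t \<in> Xbar" using im by auto
    thus "fst (\<sigma> t)^2 + fst (snd (\<sigma> t))^2 + fst (snd (snd (\<sigma> t)))^2 = 1 \<and> (h t = 1 \<or> h t = -1)"
      unfolding Xbar_def Xplus_def Xminus_def h_def by auto
  qed
  define t0 :: "nat \<Rightarrow> real" where "t0 = (\<lambda>i. if i = 0 then 1 else 0)"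
  have t0: "t0 \<in> std_simplex m" unfolding t0_def by (rule std_ne)
  have const: "\<And>t. t \<in> std_simplex m \<Longrightarrow> h t = h t0"
    using std_const[OF hc _ _ t0] pt by blast
  show "\<exists>e. (e = 1 \<or> e = -1) \<and> \<sigma> = lft e m (prj m \<sigma>)"
  proof (intro exI conjI)
    show "h t0 = 1 \<or> h t0 = -1" using pt t0 by blast
    show "\<sigma> = lft (h t0) m (prj m \<sigma>)"
    proof
      fix t show "\<sigma> t = lft (h t0) m (prj m \<sigma>) t"
      proof (cases "t \<in> std_simplex m")
        case True
        thus ?thesis using const[OF True] unfolding lft_def prj_def h_def by (simp add: prod_eq_iff)
      next
        case False thus ?thesis using ex unfolding lft_def prj_def by (simp add: extensional_def)
      qed
    qed
  qed
  have "continuous_on (std_simplex m) (\<lambda>t. (fst (\<sigma> t), fst (snd (\<sigma> t)), fst (snd (snd (\<sigma> t)))))"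
    by (intro continuous_intros c)
  moreover have "continuous_on (std_simplex m) (prj m \<sigma>) = continuous_on (std_simplex m) (\<lambda>t. (fst (\<sigma> t), fst (snd (\<sigma> t)), fst (snd (snd (\<sigma> t)))))"
    by (rule continuous_on_cong) (auto simp: prj_def)
  ultimately have "continuous_on (std_simplex m) (prj m \<sigma>)" by simp
  moreover have "prj m \<sigma> ` std_simplex m \<subseteq> S2"
    using pt unfolding prj_def S2_def by auto
  ultimately show "sing_simplex m S2 (prj m \<sigma>)" unfolding sing_simplex_def using prj_ext by blast
qed


lemma sbar_lft: "restrict (sbar \<circ> lft e m \<rho>) (std_simplex m) = lft (-e) m \<rho>"
  unfolding lft_def sbar_def by (auto intro!: ext)

lemma sing_mono: "sing_simplex m Y \<rho> \<Longrightarrow> Y \<subseteq> Z \<Longrightarrow> sing_simplex m Z \<rho>"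
  unfolding sing_simplex_def by auto

lemma sing_ext: "sing_simplex m Y \<rho> \<Longrightarrow> \<rho> \<in> extensional (std_simplex m)"
  unfolding sing_simplex_def by auto

lemma phi_prime_le: "phi_prime \<phi> (a, b, c) \<le> u \<longleftrightarrow> \<phi> (a, b, c, 1) \<le> u \<and> \<phi> (a, b, c, -1) \<le> u"
  unfolding phi_prime_def by auto

lemma Phi_sum:
  fixes d :: "(real \<times> real \<times> real, 'k::field) chain"
  assumes fin: "finite {\<tau>. d \<tau> \<noteq> 0}"
    and ext: "\<forall>\<tau>. d \<tau> \<noteq> 0 \<longrightarrow> \<tau> \<in> extensional (std_simplex m)"
  shows "Phi m d = (\<lambda>\<tau>. \<Sum>\<sigma>\<in>lft 1 m ` {\<tau>. d \<tau> \<noteq> 0}. d (prj m \<sigma>) * (delta \<sigma> \<tau> + delta (restrict (sbar \<circ> \<sigma>) (std_simplex m)) \<tau>))"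
proof
  fix \<tau>
  define D where "D = {\<tau>. d \<tau> \<noteq> 0}"
  have extD: "\<And>\<rho>. \<rho> \<in> D \<Longrightarrow> \<rho> \<in> extensional (std_simplex m)" using ext D_def by auto
  have "(\<Sum>\<sigma>\<in>lft 1 m ` D. d (prj m \<sigma>) * (delta \<sigma> \<tau> + delta (restrict (sbar \<circ> \<sigma>) (std_simplex m)) \<tau>))
      = (\<Sum>\<rho>\<in>D. d (prj m (lft 1 m \<rho>)) * (delta (lft 1 m \<rho>) \<tau> + delta (restrict (sbar \<circ> lft 1 m \<rho>) (std_simplex m)) \<tau>))"
    by (subst sum.reindex) (auto intro!: inj_onI dest: lft_inj[OF extD extD])
  also have "\<dots> = (\<Sum>\<rho>\<in>D. (if lft 1 m \<rho> = \<tau> then d \<rho> else 0) + (if lft (-1) m \<rho> = \<tau> then d \<rho> else 0))"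
    by (intro sum.cong refl) (auto simp: prj_lft extD sbar_lft delta_def)
  also have "\<dots> = (\<Sum>\<rho>\<in>D. if isl m \<tau> then (if \<rho> = prj m \<tau> then d \<rho> else 0) else 0)"
    by (intro sum.cong refl) (rule key[OF extD])
  also have "\<dots> = Phi m d \<tau>"
    using fin unfolding Phi_def D_def by auto
  finally show "Phi m d \<tau> = (\<Sum>\<sigma>\<in>lft 1 m ` {\<tau>. d \<tau> \<noteq> 0}. d (prj m \<sigma>) * (delta \<sigma> \<tau> + delta (restrict (sbar \<circ> \<sigma>) (std_simplex m)) \<tau>))"
    unfolding D_def by simp
qed

lemma Phi_in_Cbar:
  fixes d :: "(real \<times> real \<times> real, 'k::field) chain"
  assumes "d \<in> chains TYPE('k) m {y \<in> S2. phi_prime \<phi> y \<le> u}"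
  shows "Phi m d \<in> Cbar_sub TYPE('k) \<phi> m u"
proof -
  have fin: "finite {\<tau>. d \<tau> \<noteq> 0}" and ss: "\<And>\<tau>. d \<tau> \<noteq> 0 \<Longrightarrow> sing_simplex m {y \<in> S2. phi_prime \<phi> y \<le> u} \<tau>"
    using assms unfolding chains_def by auto
  have ext: "\<forall>\<tau>. d \<tau> \<noteq> 0 \<longrightarrow> \<tau> \<in> extensional (std_simplex m)" using ss sing_ext by blast
  have "Phi m d \<in> Cbar TYPE('k) m"
    unfolding Cbar_def
  proof (intro CollectI exI conjI)
    show "finite (lft 1 m ` {\<tau>. d \<tau> \<noteq> 0})" using fin by simp
    show "\<forall>\<sigma>\<in>lft 1 m ` {\<tau>. d \<tau> \<noteq> 0}. sing_simplex m Xbar \<sigma>"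
    proof
      fix \<sigma> assume "\<sigma> \<in> lft 1 m ` {\<tau>. d \<tau> \<noteq> 0}"
      then obtain \<tau> where "d \<tau> \<noteq> 0" "\<sigma> = lft 1 m \<tau>" by auto
      moreover have "sing_simplex m S2 \<tau>" by (rule sing_mono[OF ss[OF \<open>d \<tau> \<noteq> 0\<close>]]) auto
      ultimately show "sing_simplex m Xbar \<sigma>" using lft_sing by auto
    qed
    show "Phi m d = (\<lambda>\<tau>. \<Sum>\<sigma>\<in>lft 1 m ` {\<tau>. d \<tau> \<noteq> 0}. d (prj m \<sigma>) * (delta \<sigma> \<tau> + delta (restrict (sbar \<circ> \<sigma>) (std_simplex m)) \<tau>))"
      by (rule Phi_sum[OF fin ext])
  qed
  moreover have "phibar \<phi> m (Phi m d) \<le> ereal u"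
  proof (cases "Phi m d = (\<lambda>_. 0)")
    case True thus ?thesis unfolding phibar_def by simp
  next
    case False
    have "\<forall>x\<in>\<Union>{\<sigma> ` std_simplex m |\<sigma>. Phi m d \<sigma> \<noteq> 0}. \<phi> x \<le> u"
    proof
      fix x assume "x \<in> \<Union>{\<sigma> ` std_simplex m |\<sigma>. Phi m d \<sigma> \<noteq> 0}"
      then obtain \<sigma> t where a: "Phi m d \<sigma> \<noteq> 0" "t \<in> std_simplex m" and xe: "x = \<sigma> t" by auto
      hence i: "isl m \<sigma>" and dn: "d (prj m \<sigma>) \<noteq> 0" unfolding Phi_def by (auto split: if_splits)
      have sp: "sing_simplex m {y \<in> S2. phi_prime \<phi> y \<le> u} (prj m \<sigma>)" using ss[OF dn] .
      hence "prj m \<sigma> t \<in> {y \<in> S2. phi_prime \<phi> y \<le> u}" using a(2) unfolding sing_simplex_def by auto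
      hence pp: "phi_prime \<phi> (prj m \<sigma> t) \<le> u" by simp
      obtain p q r where pqr: "prj m \<sigma> t = (p, q, r)" by (cases "prj m \<sigma> t") auto
      from i obtain e where e: "e = 1 \<or> e = -1" "\<sigma> = lft e m (prj m \<sigma>)" unfolding isl_def by auto
      have "\<sigma> t = lft e m (prj m \<sigma>) t" using e(2) by metis
      hence "\<sigma> t = (p, q, r, e)" using a(2) pqr by (simp add: lft_def)
      thus "\<phi> x \<le> u" using pp pqr e(1) phi_prime_le xe by auto
    qed
    thus ?thesis unfolding phibar_def using False by (auto intro!: Sup_least)
  qed
  ultimately show ?thesis unfolding Cbar_sub_def by simp
qed


lemma Cbar_in_Phi:
  fixes c :: "(real \<times> real \<times> real \<times> real, 'k::field) chain"
  assumes "c \<in> Cbar_sub TYPE('k) \<phi> m u"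
  shows "c \<in> Phi m ` chains TYPE('k) m {y \<in> S2. phi_prime \<phi> y \<le> u}"
proof -
  from assms obtain S a where S: "finite S" "\<forall>\<sigma>\<in>S. sing_simplex m Xbar \<sigma>"
    and c: "c = (\<lambda>\<tau>. \<Sum>\<sigma>\<in>S. a \<sigma> * (delta \<sigma> \<tau> + delta (restrict (sbar \<circ> \<sigma>) (std_simplex m)) \<tau>))"
    and ph: "phibar \<phi> m c \<le> ereal u"
    unfolding Cbar_sub_def Cbar_def by auto
  define R where "R = (\<lambda>\<sigma>::(nat \<Rightarrow> real) \<Rightarrow> real \<times> real \<times> real \<times> real. restrict (sbar \<circ> \<sigma>) (std_simplex m))"
  have F0: "\<And>\<tau>. c \<tau> \<noteq> 0 \<Longrightarrow> \<tau> \<in> S \<union> R ` S"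
  proof (rule ccontr)
    fix \<tau> assume a: "c \<tau> \<noteq> 0" "\<tau> \<notin> S \<union> R ` S"
    hence "c \<tau> = 0" unfolding c R_def by (intro sum.neutral) (auto simp: delta_def)
    thus False using a by simp
  qed
  have lftS: "\<And>\<sigma>. \<sigma> \<in> S \<Longrightarrow> \<exists>e. (e = 1 \<or> e = -1) \<and> \<sigma> = lft e m (prj m \<sigma>) \<and> R \<sigma> = lft (-e) m (prj m \<sigma>)"
  proof -
    fix \<sigma> assume "\<sigma> \<in> S"
    then obtain e where e: "e = 1 \<or> e = -1" "\<sigma> = lft e m (prj m \<sigma>)" using sing_Xbar(1) S(2) by blast
    have "R \<sigma> = lft (-e) m (prj m \<sigma>)" unfolding R_def by (subst e(2)) (rule sbar_lft)
    thus "\<exists>e. (e = 1 \<or> e = -1) \<and> \<sigma> = lft e m (prj m \<sigma>) \<and> R \<sigma> = lft (-e) m (prj m \<sigma>)" using e by blast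
  qed
  have F1: "\<And>\<tau>. c \<tau> \<noteq> 0 \<Longrightarrow> isl m \<tau> \<and> sing_simplex m S2 (prj m \<tau>)"
  proof -
    fix \<tau> assume "c \<tau> \<noteq> 0"
    then obtain \<sigma> where \<sigma>: "\<sigma> \<in> S" "\<tau> = \<sigma> \<or> \<tau> = R \<sigma>" using F0 by blast
    obtain e where e: "e = 1 \<or> e = -1" "\<sigma> = lft e m (prj m \<sigma>)" "R \<sigma> = lft (-e) m (prj m \<sigma>)"
      using lftS[OF \<sigma>(1)] by blast
    have sp: "sing_simplex m S2 (prj m \<sigma>)" using sing_Xbar(2) S(2) \<sigma>(1) by blast
    show "isl m \<tau> \<and> sing_simplex m S2 (prj m \<tau>)"
    proof (cases "\<tau> = \<sigma>")
      case True thus ?thesis using e sp isl_lft[OF _ prj_ext] by metis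
    next
      case False
      hence t: "\<tau> = lft (-e) m (prj m \<sigma>)" using \<sigma>(2) e(3) by simp
      have "-e = 1 \<or> -e = -1" using e(1) by auto
      thus ?thesis using t sp isl_lft[OF _ prj_ext] prj_lft[OF prj_ext] by metis
    qed
  qed
  have F2: "\<And>\<rho>::(nat \<Rightarrow> real) \<Rightarrow> real \<times> real \<times> real. \<rho> \<in> extensional (std_simplex m) \<Longrightarrow> c (lft 1 m \<rho>) = c (lft (-1) m \<rho>)"
  proof -
    fix \<rho> :: "(nat \<Rightarrow> real) \<Rightarrow> real \<times> real \<times> real" assume r: "\<rho> \<in> extensional (std_simplex m)"
    show "c (lft 1 m \<rho>) = c (lft (-1) m \<rho>)" unfolding c
    proof (intro sum.cong refl)
      fix \<sigma> assume "\<sigma> \<in> S"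
      then obtain e where e: "e = 1 \<or> e = -1" "\<sigma> = lft e m (prj m \<sigma>)" "R \<sigma> = lft (-e) m (prj m \<sigma>)"
        using lftS by blast
      have h: "\<And>e'. (lft e' m \<rho> = \<sigma>) = (e' = e \<and> \<rho> = prj m \<sigma>)"
        using lft_eq_iff[OF r prj_ext, of _ e \<sigma>, unfolded e(2)[symmetric]] .
      have h': "\<And>e'. (lft e' m \<rho> = R \<sigma>) = (e' = -e \<and> \<rho> = prj m \<sigma>)"
        using lft_eq_iff[OF r prj_ext, of _ "-e" \<sigma>] e(3) by simp
      have "delta \<sigma> (lft 1 m \<rho>) + delta (R \<sigma>) (lft 1 m \<rho>) = (if \<rho> = prj m \<sigma> then 1 else (0::'k))"
        using e(1) h[of 1] h'[of 1] unfolding delta_def by auto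
      moreover have "delta \<sigma> (lft (-1) m \<rho>) + delta (R \<sigma>) (lft (-1) m \<rho>) = (if \<rho> = prj m \<sigma> then 1 else (0::'k))"
        using e(1) h[of "-1"] h'[of "-1"] unfolding delta_def by auto
      ultimately show "a \<sigma> * (delta \<sigma> (lft 1 m \<rho>) + delta (restrict (sbar \<circ> \<sigma>) (std_simplex m)) (lft 1 m \<rho>)) =
          a \<sigma> * (delta \<sigma> (lft (-1) m \<rho>) + delta (restrict (sbar \<circ> \<sigma>) (std_simplex m)) (lft (-1) m \<rho>))"
        unfolding R_def by simp
    qed
  qed
  define d where "d = (\<lambda>\<tau>. if \<tau> \<in> extensional (std_simplex m) then c (lft 1 m \<tau>) else 0)"
  have cPhi: "c = Phi m d"
  proof
    fix \<tau> show "c \<tau> = Phi m d \<tau>"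
    proof (cases "isl m \<tau>")
      case True
      have "Phi m d \<tau> = c (lft 1 m (prj m \<tau>))" using True prj_ext unfolding Phi_def d_def by simp
      also have "\<dots> = c \<tau>"
        using True F2[OF prj_ext] unfolding isl_def by metis
      finally show ?thesis by simp
    next
      case False thus ?thesis using F1 unfolding Phi_def by auto
    qed
  qed
  have cne: "\<And>\<tau>. d \<tau> \<noteq> 0 \<Longrightarrow> \<tau> \<in> extensional (std_simplex m) \<and> c (lft 1 m \<tau>) \<noteq> 0 \<and> c (lft (-1) m \<tau>) \<noteq> 0"
    unfolding d_def using F2 by (auto split: if_splits)
  have "{\<sigma>. c \<sigma> \<noteq> 0} \<subseteq> S \<union> R ` S" using F0 by blast
  moreover have "finite (S \<union> R ` S)" using S(1) by simp
  ultimately have finc: "finite {\<sigma>. c \<sigma> \<noteq> 0}" by (rule finite_subset)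
  have "{\<tau>. d \<tau> \<noteq> 0} \<subseteq> prj m ` {\<sigma>. c \<sigma> \<noteq> 0}"
  proof
    fix \<tau> assume "\<tau> \<in> {\<tau>. d \<tau> \<noteq> 0}"
    hence "\<tau> \<in> extensional (std_simplex m)" "c (lft 1 m \<tau>) \<noteq> 0" using cne by auto
    thus "\<tau> \<in> prj m ` {\<sigma>. c \<sigma> \<noteq> 0}" using prj_lft by (metis (mono_tags, lifting) image_eqI mem_Collect_eq)
  qed
  hence find: "finite {\<tau>. d \<tau> \<noteq> 0}" using finc finite_subset by blast
  have bound: "\<And>\<sigma> t. c \<sigma> \<noteq> 0 \<Longrightarrow> t \<in> std_simplex m \<Longrightarrow> \<phi> (\<sigma> t) \<le> u"
  proof -
    fix \<sigma> t assume a: "c \<sigma> \<noteq> 0" "t \<in> std_simplex m"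
    hence "c \<noteq> (\<lambda>_. 0)" by auto
    hence "Sup ((\<lambda>x. ereal (\<phi> x)) ` (\<Union>{\<sigma> ` std_simplex m | \<sigma>. c \<sigma> \<noteq> 0})) \<le> ereal u"
      using ph unfolding phibar_def by simp
    moreover have "\<sigma> t \<in> \<Union>{\<sigma> ` std_simplex m | \<sigma>. c \<sigma> \<noteq> 0}" using a by auto
    ultimately have "ereal (\<phi> (\<sigma> t)) \<le> ereal u" by (meson Sup_le_iff imageI)
    thus "\<phi> (\<sigma> t) \<le> u" by simp
  qed
  have "d \<in> chains TYPE('k) m {y \<in> S2. phi_prime \<phi> y \<le> u}"
    unfolding chains_def
  proof (intro CollectI conjI find allI impI)
    fix \<tau> assume "d \<tau> \<noteq> 0"
    hence ex: "\<tau> \<in> extensional (std_simplex m)" and c1: "c (lft 1 m \<tau>) \<noteq> 0" and c2: "c (lft (-1) m \<tau>) \<noteq> 0"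
      using cne by auto
    have sp: "sing_simplex m S2 \<tau>" using F1[OF c1] prj_lft[OF ex] by simp
    show "sing_simplex m {y \<in> S2. phi_prime \<phi> y \<le> u} \<tau>"
      unfolding sing_simplex_def
    proof (intro conjI)
      show "continuous_on (std_simplex m) \<tau>" "\<tau> \<in> extensional (std_simplex m)"
        using sp unfolding sing_simplex_def by auto
      show "\<tau> ` std_simplex m \<subseteq> {y \<in> S2. phi_prime \<phi> y \<le> u}"
      proof
        fix y assume "y \<in> \<tau> ` std_simplex m"
        then obtain t where t: "t \<in> std_simplex m" "y = \<tau> t" by auto
        obtain p q r where pqr: "\<tau> t = (p, q, r)" by (cases "\<tau> t") auto
        have "\<phi> (lft 1 m \<tau> t) \<le> u" "\<phi> (lft (-1) m \<tau> t) \<le> u" using bound c1 c2 t(1) by auto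
        hence "\<phi> (p, q, r, 1) \<le> u" "\<phi> (p, q, r, -1) \<le> u" using t(1) pqr by (auto simp: lft_def)
        moreover have "y \<in> S2" using sp t unfolding sing_simplex_def by auto
        ultimately show "y \<in> {y \<in> S2. phi_prime \<phi> y \<le> u}" using t pqr phi_prime_le by auto
      qed
    qed
  qed
  thus ?thesis using cPhi by blast
qed

lemma Phi_image: "Phi m ` chains TYPE('k::field) m {y \<in> S2. phi_prime \<phi> y \<le> u} = Cbar_sub TYPE('k) \<phi> m u"
  using Phi_in_Cbar Cbar_in_Phi by blast


lemma lincomb_cong: "(\<And>s. s \<in> S \<Longrightarrow> a s = a' s) \<Longrightarrow> lincomb a S = lincomb a' S"
  unfolding lincomb_def by (auto intro!: ext sum.cong)

lemma pers_rank_transfer: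
  fixes f g :: "('p, 'k::field) chain \<Rightarrow> ('q, 'k) chain"
  assumes AB: "f ` A n = B n" and AB': "g ` A' (Suc n) = B' (Suc n)"
    and injU: "inj_on f U" and AU: "A n \<subseteq> U" and bdU: "chain_bd (Suc n) ` A' (Suc n) \<subseteq> U"
    and linU: "\<And>a S. finite S \<Longrightarrow> S \<subseteq> A n \<Longrightarrow> lincomb a S \<in> U"
    and lin: "\<And>a S. finite S \<Longrightarrow> S \<subseteq> A n \<Longrightarrow> inj_on f S \<Longrightarrow> lincomb a (f ` S) = f (lincomb (a \<circ> f) S)"
    and cyc: "\<And>x. x \<in> A n \<Longrightarrow> chain_bd n (f x) = (\<lambda>_. 0) \<longleftrightarrow> chain_bd n x = (\<lambda>_. 0)"
    and bdc: "\<And>y. y \<in> A' (Suc n) \<Longrightarrow> chain_bd (Suc n) (g y) = f (chain_bd (Suc n) y)"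
  shows "pers_rank A A' n = pers_rank B B' n"
proof -
  let ?PA = "\<lambda>S. finite S \<and> S \<subseteq> {c \<in> A n. chain_bd n c = (\<lambda>_. 0)} \<and> indep_mod (chain_bd (Suc n) ` A' (Suc n)) S"
  let ?PB = "\<lambda>S. finite S \<and> S \<subseteq> {c \<in> B n. chain_bd n c = (\<lambda>_. 0)} \<and> indep_mod (chain_bd (Suc n) ` B' (Suc n)) S"
  have "chain_bd (Suc n) ` B' (Suc n) = (\<lambda>y. chain_bd (Suc n) (g y)) ` A' (Suc n)"
    unfolding AB'[symmetric] image_image ..
  also have "\<dots> = (\<lambda>y. f (chain_bd (Suc n) y)) ` A' (Suc n)"
    by (rule image_cong[OF refl]) (rule bdc)
  also have "\<dots> = f ` chain_bd (Suc n) ` A' (Suc n)" by (simp add: image_image)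
  finally have bdB: "chain_bd (Suc n) ` B' (Suc n) = f ` chain_bd (Suc n) ` A' (Suc n)" .
  have "{enat (card S) | S. ?PA S} = {enat (card S) | S. ?PB S}"
  proof (intro equalityI subsetI)
    fix x assume "x \<in> {enat (card S) | S. ?PA S}"
    then obtain S where x: "x = enat (card S)" and S: "?PA S" by blast
    have SA: "S \<subseteq> A n" using S by auto
    have injS: "inj_on f S" using inj_on_subset[OF injU] SA AU by blast
    have "?PB (f ` S)"
    proof (intro conjI)
      show "finite (f ` S)" using S by simp
      show "f ` S \<subseteq> {c \<in> B n. chain_bd n c = (\<lambda>_. 0)}"
      proof
        fix x assume "x \<in> f ` S"
        then obtain s where s: "s \<in> S" "x = f s" by blast
        hence sA: "s \<in> A n" and sb: "chain_bd n s = (\<lambda>_. 0)" using S by auto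
        have "f s \<in> B n" using AB sA by blast
        moreover have "chain_bd n (f s) = (\<lambda>_. 0)" using cyc[OF sA] sb by simp
        ultimately show "x \<in> {c \<in> B n. chain_bd n c = (\<lambda>_. 0)}" using s(2) by simp
      qed
      show "indep_mod (chain_bd (Suc n) ` B' (Suc n)) (f ` S)"
        unfolding indep_mod_def
      proof (intro allI impI ballI)
        fix a t assume h: "lincomb a (f ` S) \<in> chain_bd (Suc n) ` B' (Suc n)" and t: "t \<in> f ` S"
        have "f (lincomb (a \<circ> f) S) \<in> f ` chain_bd (Suc n) ` A' (Suc n)"
          using h lin[OF _ SA injS] S bdB by simp
        then obtain y where y: "y \<in> A' (Suc n)" "f (lincomb (a \<circ> f) S) = f (chain_bd (Suc n) y)"
          by blast
        have u1: "lincomb (a \<circ> f) S \<in> U" using linU[OF _ SA] S by blast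
        have u2: "chain_bd (Suc n) y \<in> U" using bdU y(1) by blast
        have "lincomb (a \<circ> f) S = chain_bd (Suc n) y"
          using injU y(2) u1 u2 unfolding inj_on_def by blast
        hence "lincomb (a \<circ> f) S \<in> chain_bd (Suc n) ` A' (Suc n)" using y(1) by blast
        hence "\<forall>s\<in>S. (a \<circ> f) s = 0" using S unfolding indep_mod_def by blast
        thus "a t = 0" using t by auto
      qed
    qed
    moreover have "card (f ` S) = card S" using card_image[OF injS] .
    ultimately have "x = enat (card (f ` S)) \<and> ?PB (f ` S)" using x by simp
    thus "x \<in> {enat (card S) | S. ?PB S}" by blast
  next
    fix x assume "x \<in> {enat (card S) | S. ?PB S}"
    then obtain T where x: "x = enat (card T)" and T: "?PB T" by blast
    have "T \<subseteq> f ` A n" using T AB by auto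
    then obtain S where SA: "S \<subseteq> A n" and injS: "inj_on f S" and TS: "T = f ` S"
      using subset_image_inj by metis
    have finS: "finite S" using T TS injS finite_image_iff by blast
    have "?PA S"
    proof (intro conjI finS)
      show "S \<subseteq> {c \<in> A n. chain_bd n c = (\<lambda>_. 0)}"
      proof
        fix s assume s: "s \<in> S"
        hence sA: "s \<in> A n" using SA by blast
        have "f s \<in> T" using s TS by blast
        hence "chain_bd n (f s) = (\<lambda>_. 0)" using T by blast
        hence "chain_bd n s = (\<lambda>_. 0)" using cyc[OF sA] by simp
        thus "s \<in> {c \<in> A n. chain_bd n c = (\<lambda>_. 0)}" using sA by simp
      qed
      show "indep_mod (chain_bd (Suc n) ` A' (Suc n)) S"
        unfolding indep_mod_def
      proof (intro allI impI ballI)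
        fix a s assume h: "lincomb a S \<in> chain_bd (Suc n) ` A' (Suc n)" and s: "s \<in> S"
        define b where "b = (\<lambda>t. a (the_inv_into S f t))"
        have "lincomb (b \<circ> f) S = lincomb a S"
          by (rule lincomb_cong) (simp add: b_def the_inv_into_f_f[OF injS])
        hence "lincomb b T = f (lincomb a S)" using lin[OF finS SA injS] TS by simp
        hence "lincomb b T \<in> chain_bd (Suc n) ` B' (Suc n)" using h bdB by auto
        hence "\<forall>t\<in>T. b t = 0" using T unfolding indep_mod_def by blast
        hence "b (f s) = 0" using s TS by auto
        thus "a s = 0" by (simp add: b_def the_inv_into_f_f[OF injS s])
      qed
    qed
    moreover have "card T = card S" using card_image[OF injS] TS by simp
    ultimately have "x = enat (card S) \<and> ?PA S" using x by simp
    thus "x \<in> {enat (card S) | S. ?PA S}" by blast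
  qed
  thus ?thesis unfolding pers_rank_def by simp
qed


lemma Phi_lin:
  assumes "finite S" "inj_on (Phi m) S"
  shows "lincomb a (Phi m ` S) = Phi m (lincomb (a \<circ> Phi m) S)"
proof
  fix \<sigma>
  have "lincomb a (Phi m ` S) \<sigma> = (\<Sum>s\<in>S. a (Phi m s) * Phi m s \<sigma>)"
    unfolding lincomb_def by (subst sum.reindex[OF assms(2)]) simp
  also have "\<dots> = Phi m (lincomb (a \<circ> Phi m) S) \<sigma>"
    unfolding Phi_def lincomb_def by simp
  finally show "lincomb a (Phi m ` S) \<sigma> = Phi m (lincomb (a \<circ> Phi m) S) \<sigma>" .
qed

theorem mainTheorem7:
  fixes \<phi> :: "real \<times> real \<times> real \<times> real \<Rightarrow> real" and n :: nat and u v :: real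
  assumes "continuous_on Xbar \<phi>" and "u < v"
  shows "pbn_bar TYPE('k::field) \<phi> n u v = pbn_classical TYPE('k) S2 (phi_prime \<phi>) n u v"
proof -
  define A where "A = (\<lambda>m. chains TYPE('k) m {y \<in> S2. phi_prime \<phi> y \<le> u})"
  define A' where "A' = (\<lambda>m. chains TYPE('k) m {y \<in> S2. phi_prime \<phi> y \<le> v})"
  define U where "U = {d::(real \<times> real \<times> real, 'k) chain. \<forall>\<tau>. d \<tau> \<noteq> 0 \<longrightarrow> \<tau> \<in> extensional (std_simplex n)}"
  have chext: "\<And>m Y d \<tau>. d \<in> chains TYPE('k) m Y \<Longrightarrow> d \<tau> \<noteq> 0 \<Longrightarrow> \<tau> \<in> extensional (std_simplex m)"
    unfolding chains_def using sing_ext by blast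
  have chfin: "\<And>m Y d. d \<in> chains TYPE('k) m Y \<Longrightarrow> finite {\<tau>. d \<tau> \<noteq> 0}"
    unfolding chains_def by blast
  have "pers_rank A A' n = pers_rank (\<lambda>m. Cbar_sub TYPE('k) \<phi> m u) (\<lambda>m. Cbar_sub TYPE('k) \<phi> m v) n"
  proof (rule pers_rank_transfer[where f = "Phi n" and g = "Phi (Suc n)" and U = U])
    show "Phi n ` A n = Cbar_sub TYPE('k) \<phi> n u" unfolding A_def by (rule Phi_image)
    show "Phi (Suc n) ` A' (Suc n) = Cbar_sub TYPE('k) \<phi> (Suc n) v" unfolding A'_def by (rule Phi_image)
    show "inj_on (Phi n) U" unfolding U_def by (rule inj_onI) (rule Phi_inj, auto)
    show "A n \<subseteq> U" unfolding U_def A_def using chext by blast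
    show "chain_bd (Suc n) ` A' (Suc n) \<subseteq> U" unfolding U_def using bd_ext by blast
    show "lincomb a S \<in> U" if "finite S" "S \<subseteq> A n" for a S
    proof -
      have "\<And>\<tau>. lincomb a S \<tau> \<noteq> 0 \<Longrightarrow> \<tau> \<in> extensional (std_simplex n)"
      proof (rule ccontr)
        fix \<tau> assume h: "lincomb a S \<tau> \<noteq> 0" "\<tau> \<notin> extensional (std_simplex n)"
        have "\<forall>s\<in>S. s \<tau> = 0" using that(2) h(2) chext unfolding A_def by blast
        hence "lincomb a S \<tau> = 0" unfolding lincomb_def by (intro sum.neutral) simp
        thus False using h by simp
      qed
      thus ?thesis unfolding U_def by blast
    qed
    show "lincomb a (Phi n ` S) = Phi n (lincomb (a \<circ> Phi n) S)" if "finite S" "S \<subseteq> A n" "inj_on (Phi n) S" for a S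
      using Phi_lin that by blast
    show "chain_bd n (Phi n x) = (\<lambda>_. 0) \<longleftrightarrow> chain_bd n x = (\<lambda>_. 0)" if "x \<in> A n" for x
    proof (cases n)
      case 0 thus ?thesis unfolding chain_bd_def by simp
    next
      case (Suc k)
      have fx: "finite {\<tau>. x \<tau> \<noteq> 0}" and ex: "\<forall>\<tau>. x \<tau> \<noteq> 0 \<longrightarrow> \<tau> \<in> extensional (std_simplex (Suc k))"
        using that chfin chext unfolding A_def Suc by blast+
      have "chain_bd n (Phi n x) = Phi k (chain_bd (Suc k) x)" using bd_Phi[OF fx ex] Suc by simp
      moreover have "Phi k (chain_bd (Suc k) x) = Phi k (\<lambda>_. 0) \<longleftrightarrow> chain_bd (Suc k) x = (\<lambda>_. 0)"
        using Phi_inj[of "chain_bd (Suc k) x" k "\<lambda>_. 0"] bd_ext by auto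
      moreover have "Phi k (\<lambda>_. 0::'k) = (\<lambda>_. 0)" by (rule Phi_zero)
      ultimately show ?thesis using Suc by simp
    qed
    show "chain_bd (Suc n) (Phi (Suc n) y) = Phi n (chain_bd (Suc n) y)" if "y \<in> A' (Suc n)" for y
      using bd_Phi[of y n] that chfin chext unfolding A'_def by blast
  qed
  thus ?thesis unfolding pbn_bar_def pbn_classical_def A_def A'_def by simp
qed

end
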